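(* Let $\mathbb{R}^n$ be endowed with the $\ell_1$ norm and $\mathbb{R}^m$ with the Euclidean norm $\|\cdot\|_2$. Let $A\in\mathbb{R}^{m\times n}$, $b\in\mathbb{R}^m$ and $Q\in\mathbb{R}^{m\times m}$ symmetric positive semidefinite be such that $\begin{bmatrix}Q^{1/2}A\\ b^{\mathsf T}A\end{bmatrix}$ has at least two different columns. Let $f(u)=\frac12\langle Qu,u\rangle+\langle b,u\rangle$. Then $v=2Q^{1/2}u^\star$ is the same for all $u^\star\in\operatorname{Argmin}_{u\in\mathrm{conv}(A)}f(u)$, and \[ \mu^\star_{f,A}\ge\frac{\Phi_v(\bar A)^2}{4}>0,\qquad \bar A:=\begin{bmatrix}Q^{1/2}A\\ 2b^{\mathsf T}A\end{bmatrix}\in\mathbb{R}^{(m+1)\times n}. \]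
   Context: $\Delta_{n-1}=\{x\in\mathbb{R}^n_+:\sum_ix_i=1\}$; a matrix is identified with the set of its columns; $\mathrm{conv}(A)=\{Ax:x\in\Delta_{n-1}\}$. With $f^\star=\min_{x\in\Delta_{n-1}}f(Ax)$ and $Z^\star=\{z\in\Delta_{n-1}:f(Az)=f^\star\}$, $\mu^\star_{f,A}=\inf_{x\in\Delta_{n-1}\setminus Z^\star}\frac{2(f(Ax)-f^\star)}{\mathrm{dist}(x,Z^\star)^2}$, where $\mathrm{dist}(x,Z^\star)=\min_{z\in Z^\star}\|x-z\|_1$. For $v\in\mathbb{R}^m$ and $\bar w=(w,w_{m+1})\in\mathbb{R}^{m+1}$ put $\|\bar w\|_v=\sqrt{\|w\|_2^2+|\langle v,w\rangle+w_{m+1}|}$, and for nonempty $F,G$ put $\mathrm{dist}_v(F,G)=\min_{\bar w\in F,\bar w'\in G}\|\bar w-\bar w'\|_v$. For $\bar A\in\mathbb{R}^{(m+1)\times n}$ with at least two different columns let $F(v)=\operatorname{Argmin}_{\bar w\in\mathrm{conv}(\bar A)}\langle(v,1),\bar w\rangle$ and $\Phi_v(\bar A)=\min\{\mathrm{dist}_v(G,\mathrm{conv}(\bar A\setminus G)):G\text{ a face of }F(v),\ \emptyset\ne G\ne\mathrm{conv}(\bar A)\}$, where $\bar A\setminus G$ denotes the columns of $\bar A$ not in $G$. *)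

theory Defs
  imports "HOL-Analysis.Analysis"
begin

text \<open>Vectors of R^n are of type real^'n, matrices A in R^{m x n} of type real^'n^'m
 (rows indexed by 'm). Vectors of R^{m+1} are pairs (w, w_{m+1}) :: (real^'m) \<times> real.\<close>

definition std_simplex :: "(real^'n) set" where
  "std_simplex = {x. (\<forall>i. 0 \<le> x $ i) \<and> (\<Sum>i\<in>UNIV. x $ i) = 1}"

definition convA :: "real^'n^'m \<Rightarrow> (real^'m) set" where
  "convA A = {A *v x | x. x \<in> std_simplex}"

definition l1dist :: "real^'n \<Rightarrow> real^'n \<Rightarrow> real" where
  "l1dist x z = (\<Sum>i\<in>UNIV. \<bar>x $ i - z $ i\<bar>)"

definition fstar :: "(real^'m \<Rightarrow> real) \<Rightarrow> real^'n^'m \<Rightarrow> real" where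
  "fstar f A = (INF x\<in>std_simplex. f (A *v x))"

definition Zstar :: "(real^'m \<Rightarrow> real) \<Rightarrow> real^'n^'m \<Rightarrow> (real^'n) set" where
  "Zstar f A = {z \<in> std_simplex. f (A *v z) = fstar f A}"

definition dist_Z :: "(real^'m \<Rightarrow> real) \<Rightarrow> real^'n^'m \<Rightarrow> real^'n \<Rightarrow> real" where
  "dist_Z f A x = (INF z\<in>Zstar f A. l1dist x z)"

text \<open>mu^star_{f,A}; an infimum in the extended reals (empty infimum = +infinity)\<close>
definition mu_star :: "(real^'m \<Rightarrow> real) \<Rightarrow> real^'n^'m \<Rightarrow> ereal" where
  "mu_star f A = (INF x\<in>std_simplex - Zstar f A.
      ereal (2 * (f (A *v x) - fstar f A) / (dist_Z f A x)\<^sup>2))"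

definition vnorm :: "real^'m \<Rightarrow> (real^'m) \<times> real \<Rightarrow> real" where
  "vnorm v wb = sqrt ((norm (fst wb))\<^sup>2 + \<bar>v \<bullet> fst wb + snd wb\<bar>)"

definition dist_v :: "real^'m \<Rightarrow> ((real^'m) \<times> real) set \<Rightarrow> ((real^'m) \<times> real) set \<Rightarrow> real" where
  "dist_v v F G = (INF p\<in>F \<times> G. vnorm v (fst p - snd p))"

text \<open>Columns of a matrix Abar in R^{(m+1) x n}, given as a function from column indices.\<close>
definition cols :: "('n \<Rightarrow> (real^'m) \<times> real) \<Rightarrow> ((real^'m) \<times> real) set" where
  "cols Ab = range Ab"

definition Fv :: "real^'m \<Rightarrow> ('n \<Rightarrow> (real^'m) \<times> real) \<Rightarrow> ((real^'m) \<times> real) set" where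
  "Fv v Ab = {wb \<in> convex hull cols Ab.
      \<forall>wb' \<in> convex hull cols Ab. v \<bullet> fst wb + snd wb \<le> v \<bullet> fst wb' + snd wb'}"

definition Phi :: "real^'m \<Rightarrow> ('n \<Rightarrow> (real^'m) \<times> real) \<Rightarrow> real" where
  "Phi v Ab = Inf {dist_v v G (convex hull (cols Ab - G)) | G.
      G face_of Fv v Ab \<and> G \<noteq> {} \<and> G \<noteq> convex hull cols Ab}"

definition sym_psd :: "real^'m^'m \<Rightarrow> bool" where
  "sym_psd Q \<longleftrightarrow> transpose Q = Q \<and> (\<forall>x. 0 \<le> x \<bullet> (Q *v x))"

definition psd_sqrt :: "real^'m^'m \<Rightarrow> real^'m^'m" where
  "psd_sqrt Q = (THE S. sym_psd S \<and> S ** S = Q)"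

end

theory Submission
  imports Defs
begin

lemma quad_arith:
  fixes c K :: real
  assumes "\<And>t. 0 \<le> 2*t*c + t\<^sup>2*K"
  shows "c = 0"
proof (rule ccontr)
  assume c: "c \<noteq> 0"
  define d where "d = \<bar>K\<bar> + 1"
  have d: "d > 0" "\<bar>K\<bar> < d" by (auto simp: d_def)
  have "0 \<le> 2*(-c/d)*c + (-c/d)\<^sup>2*K" by (rule assms)
  hence "0 \<le> d * (2*(-c/d)*c + (-c/d)\<^sup>2*K) * d" using d by simp
  also have "\<dots> = -2*c\<^sup>2*d + c\<^sup>2*K" using d by (simp add: field_simps power2_eq_square)
  finally have "2*c\<^sup>2*d \<le> c\<^sup>2*K" by simp
  moreover have "c\<^sup>2*K \<le> c\<^sup>2*\<bar>K\<bar>" by (simp add: mult_left_mono)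
  moreover have "c\<^sup>2*\<bar>K\<bar> < c\<^sup>2 * d" using d c by simp
  moreover have "c\<^sup>2 * d < 2*c\<^sup>2*d" using d c by simp
  ultimately show False by linarith
qed

lemma sym_inner:
  fixes M :: "real^'m^'m"
  assumes "transpose M = M"
  shows "x \<bullet> (M *v y) = (M *v x) \<bullet> y"
  by (metis assms dot_lmul_matrix vector_transpose_matrix)

lemma quad_expand:
  fixes M :: "real^'m^'m"
  assumes "transpose M = M"
  shows "(x + t *\<^sub>R y) \<bullet> (M *v (x + t *\<^sub>R y)) = x \<bullet> (M *v x) + 2*t*(y \<bullet> (M *v x)) + t\<^sup>2 * (y \<bullet> (M *v y))"
proof -
  have "x \<bullet> (M *v y) = y \<bullet> (M *v x)" using sym_inner[OF assms, of x y] by (simp add: inner_commute)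
  thus ?thesis
    by (simp add: matrix_vector_right_distrib matrix_vector_mult_scaleR inner_add_left inner_add_right
        power2_eq_square algebra_simps)
qed

lemma psd_kernel:
  fixes S :: "real^'m^'m"
  assumes "sym_psd S" "x \<bullet> (S *v x) = 0"
  shows "S *v x = 0"
proof -
  have sym: "transpose S = S" and psd: "\<And>z. 0 \<le> z \<bullet> (S *v z)" using assms(1) by (auto simp: sym_psd_def)
  have "\<And>y. y \<bullet> (S *v x) = 0"
  proof -
    fix y
    show "y \<bullet> (S *v x) = 0"
    proof (rule quad_arith[where K = "y \<bullet> (S *v y)"])
      fix t :: real
      show "0 \<le> 2*t*(y \<bullet> (S *v x)) + t\<^sup>2*(y \<bullet> (S *v y))"
        using psd[of "x + t *\<^sub>R y"] quad_expand[OF sym, of x t y] assms(2) by simp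
    qed
  qed
  from this[of "S *v x"] show ?thesis by simp
qed

lemma sym_eig:
  fixes M :: "real^'m^'m"
  assumes sym: "transpose M = M" and U: "subspace U" and inv: "\<And>x. x \<in> U \<Longrightarrow> M *v x \<in> U"
    and x0: "x0 \<in> U" "x0 \<noteq> 0"
  shows "\<exists>e\<in>U. norm e = 1 \<and> M *v e = (e \<bullet> (M *v e)) *\<^sub>R e"
proof -
  define K where "K = U \<inter> sphere 0 1"
  have cK: "compact K" unfolding K_def
    by (simp add: U closed_subspace closed_Int_compact)
  have "x0 /\<^sub>R norm x0 \<in> K" using x0 U unfolding K_def by (simp add: subspace_scale)
  hence neK: "K \<noteq> {}" by auto
  have cont: "continuous_on K (\<lambda>x. x \<bullet> (M *v x))"
    by (intro continuous_intros matrix_vector_mult_linear_continuous_on)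
  obtain e where eK: "e \<in> K" and emax: "\<And>y. y \<in> K \<Longrightarrow> y \<bullet> (M *v y) \<le> e \<bullet> (M *v e)"
    using continuous_attains_sup[OF cK neK cont] by blast
  define l where "l = e \<bullet> (M *v e)"
  have eU: "e \<in> U" and ne: "norm e = 1" using eK by (auto simp: K_def)
  have ee: "e \<bullet> e = 1" using ne by (simp add: norm_eq_1)
  have key: "e \<bullet> (M *v y) = 0" if yU: "y \<in> U" and ey: "e \<bullet> y = 0" for y
  proof -
    have "- (y \<bullet> (M *v e)) = 0"
    proof (rule quad_arith[where K = "l * (y \<bullet> y) - y \<bullet> (M *v y)"])
      fix t :: real
      define z where "z = e + t *\<^sub>R y"
      have zz: "z \<bullet> z = 1 + t\<^sup>2 * (y \<bullet> y)"
        using ee ey by (simp add: z_def inner_add_left inner_add_right inner_commute power2_eq_square)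
      hence zpos: "z \<bullet> z > 0" by (simp add: add_pos_nonneg)
      hence nz: "norm z > 0" by (simp add: inner_gt_zero_iff)
      have zU: "z \<in> U" using eU yU U by (simp add: z_def subspace_add subspace_scale)
      have "z /\<^sub>R norm z \<in> K" using zU nz U unfolding K_def by (simp add: subspace_scale)
      hence "(z /\<^sub>R norm z) \<bullet> (M *v (z /\<^sub>R norm z)) \<le> l" using emax l_def by blast
      hence "(z \<bullet> (M *v z)) / (norm z)\<^sup>2 \<le> l"
        by (simp add: matrix_vector_mult_scaleR power2_eq_square divide_inverse algebra_simps)
      hence "z \<bullet> (M *v z) \<le> l * (norm z)\<^sup>2" using nz by (simp add: divide_le_eq)
      hence "z \<bullet> (M *v z) \<le> l * (z \<bullet> z)" by (simp add: power2_norm_eq_inner)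
      moreover have "z \<bullet> (M *v z) = l + 2*t*(y \<bullet> (M *v e)) + t\<^sup>2 * (y \<bullet> (M *v y))"
        using quad_expand[OF sym, of e t y] unfolding z_def l_def by simp
      ultimately have "l + 2*t*(y \<bullet> (M *v e)) + t\<^sup>2 * (y \<bullet> (M *v y)) \<le> l * (1 + t\<^sup>2 * (y \<bullet> y))"
        using zz by simp
      thus "0 \<le> 2*t*(- (y \<bullet> (M *v e))) + t\<^sup>2*(l * (y \<bullet> y) - y \<bullet> (M *v y))"
        by (simp add: algebra_simps)
    qed
    hence "y \<bullet> (M *v e) = 0" by simp
    thus ?thesis using sym_inner[OF sym, of e y] by (simp add: inner_commute)
  qed
  define r where "r = M *v e - l *\<^sub>R e"
  have rU: "r \<in> U" using inv[OF eU] eU U by (simp add: r_def subspace_diff subspace_scale)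
  have er: "e \<bullet> r = 0" using ee by (simp add: r_def l_def inner_diff_right)
  have "e \<bullet> (M *v r) = 0" by (rule key[OF rU er])
  hence "(M *v e) \<bullet> r = 0" using sym_inner[OF sym, of e r] by simp
  hence "(r + l *\<^sub>R e) \<bullet> r = 0" by (simp add: r_def)
  hence "r \<bullet> r + l * (e \<bullet> r) = 0" by (simp add: inner_add_left)
  hence "r \<bullet> r = 0" using er by simp
  hence "r = 0" by simp
  thus ?thesis using eU ne by (auto simp: r_def l_def)
qed

definition eigbasis :: "real^'m^'m \<Rightarrow> (real^'m) set \<Rightarrow> bool" where
  "eigbasis M B \<longleftrightarrow> finite B \<and> (\<forall>e\<in>B. norm e = 1 \<and> (\<exists>c. M *v e = c *\<^sub>R e))
     \<and> (\<forall>e\<in>B. \<forall>e'\<in>B. e \<noteq> e' \<longrightarrow> e \<bullet> e' = 0)"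

lemma eigbasis_eig:
  assumes "eigbasis M B" "e \<in> B" shows "M *v e = (e \<bullet> (M *v e)) *\<^sub>R e"
proof -
  obtain c where c: "M *v e = c *\<^sub>R e" and n: "norm e = 1" using assms unfolding eigbasis_def by blast
  have "e \<bullet> (M *v e) = c" unfolding c using n by (simp add: norm_eq_1)
  thus ?thesis using c by simp
qed

lemma eigbasis_card:
  fixes M :: "real^'m^'m"
  assumes "eigbasis M B" shows "card B \<le> DIM(real^'m)"
proof -
  have "pairwise orthogonal B" using assms by (auto simp: eigbasis_def pairwise_def orthogonal_def)
  moreover have "0 \<notin> B" using assms by (auto simp: eigbasis_def)
  ultimately have "independent B" by (rule pairwise_orthogonal_independent)
  from independent_bound[OF this] show ?thesis by simp
qed

lemma sym_spectral:
  fixes M :: "real^'m^'m"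
  assumes sym: "transpose M = M"
  shows "\<exists>B. eigbasis M B \<and> (\<forall>y. (\<forall>e\<in>B. e \<bullet> y = 0) \<longrightarrow> y = 0)"
proof -
  have "eigbasis M {}" by (simp add: eigbasis_def)
  moreover have "\<forall>B. eigbasis M B \<longrightarrow> card B < DIM(real^'m) + 1"
    using eigbasis_card by (metis le_imp_less_Suc Suc_eq_plus1)
  ultimately obtain B where B: "eigbasis M B" and Bmax: "\<And>B'. eigbasis M B' \<Longrightarrow> card B' \<le> card B"
    using ex_has_greatest_nat[of "eigbasis M" "{}" card "DIM(real^'m) + 1"] by blast
  have "\<forall>y. (\<forall>e\<in>B. e \<bullet> y = 0) \<longrightarrow> y = 0"
  proof (rule ccontr)
    assume "\<not> ?thesis"
    then obtain y0 where y0: "\<forall>e\<in>B. e \<bullet> y0 = 0" "y0 \<noteq> 0" by blast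
    define U where "U = {y. \<forall>e\<in>B. e \<bullet> y = 0}"
    have U: "subspace U" unfolding U_def subspace_def by (auto simp: inner_add_right)
    have inv: "M *v x \<in> U" if "x \<in> U" for x
    proof -
      have "e \<bullet> (M *v x) = 0" if "e \<in> B" for e
      proof -
        have "e \<bullet> (M *v x) = (M *v e) \<bullet> x" by (rule sym_inner[OF sym])
        also have "\<dots> = ((e \<bullet> (M *v e)) *\<^sub>R e) \<bullet> x" using eigbasis_eig[OF B \<open>e \<in> B\<close>] by (rule arg_cong)
        also have "\<dots> = (e \<bullet> (M *v e)) * (e \<bullet> x)" by (rule inner_scaleR_left)
        also have "\<dots> = 0" using \<open>x \<in> U\<close> \<open>e \<in> B\<close> by (simp add: U_def)
        finally show ?thesis .
      qed
      thus ?thesis by (simp add: U_def)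
    qed
    have "y0 \<in> U" using y0 by (simp add: U_def)
    then obtain e where eU: "e \<in> U" and e: "norm e = 1" "M *v e = (e \<bullet> (M *v e)) *\<^sub>R e"
      using sym_eig[OF sym U inv, of y0] y0(2) by blast
    have ee: "e \<bullet> e = 1" using e by (simp add: norm_eq_1)
    have eB: "e \<notin> B" using eU ee by (auto simp: U_def)
    have f1: "finite (insert e B)" using B by (simp add: eigbasis_def)
    have f2: "\<forall>x\<in>insert e B. norm x = 1 \<and> (\<exists>c. M *v x = c *\<^sub>R x)"
      using B e(1) e(2) unfolding eigbasis_def by blast
    have eBo: "\<And>z. z \<in> B \<Longrightarrow> z \<bullet> e = 0" using eU by (simp add: U_def)
    have eBo2: "\<And>z. z \<in> B \<Longrightarrow> e \<bullet> z = 0" using eBo by (simp add: inner_commute)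
    have f3: "\<forall>x\<in>insert e B. \<forall>x'\<in>insert e B. x \<noteq> x' \<longrightarrow> x \<bullet> x' = 0"
      using B eBo eBo2 unfolding eigbasis_def by blast
    have "eigbasis M (insert e B)" using f1 f2 f3 unfolding eigbasis_def by blast
    hence "card (insert e B) \<le> card B" by (rule Bmax)
    thus False using eB B by (simp add: eigbasis_def)
  qed
  thus ?thesis using B by blast
qed

lemma eigbasis_expand:
  assumes B: "eigbasis M B" and comp: "\<forall>y. (\<forall>e\<in>B. e \<bullet> y = 0) \<longrightarrow> y = 0"
  shows "y = (\<Sum>e\<in>B. (e \<bullet> y) *\<^sub>R e)"
proof -
  have fin: "finite B" using B by (simp add: eigbasis_def)
  have "e \<bullet> (y - (\<Sum>e\<in>B. (e \<bullet> y) *\<^sub>R e)) = 0" if "e \<in> B" for e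
  proof -
    have "e \<bullet> (\<Sum>e'\<in>B. (e' \<bullet> y) *\<^sub>R e') = (\<Sum>e'\<in>B. (e' \<bullet> y) * (e \<bullet> e'))"
      by (simp add: inner_sum_right)
    also have "\<dots> = (\<Sum>e'\<in>B. if e' = e then e \<bullet> y else 0)"
    proof (rule sum.cong)
      fix e' assume e': "e' \<in> B"
      show "(e' \<bullet> y) * (e \<bullet> e') = (if e' = e then e \<bullet> y else 0)"
      proof (cases "e' = e")
        case True
        have "e \<bullet> e = 1" using B that by (simp add: eigbasis_def norm_eq_1)
        thus ?thesis using True by simp
      next
        case False
        have "e \<bullet> e' = 0" using B that e' False unfolding eigbasis_def by metis
        thus ?thesis using False by simp
      qed
    qed simp
    also have "\<dots> = e \<bullet> y" using fin that by simp
    finally show ?thesis by (simp add: inner_diff_right)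
  qed
  hence "y - (\<Sum>e\<in>B. (e \<bullet> y) *\<^sub>R e) = 0" using comp by blast
  thus ?thesis by simp
qed

lemma eigbasis_apply:
  assumes B: "eigbasis M B" and comp: "\<forall>y. (\<forall>e\<in>B. e \<bullet> y = 0) \<longrightarrow> y = 0"
  shows "M *v y = (\<Sum>e\<in>B. ((e \<bullet> (M *v e)) * (e \<bullet> y)) *\<^sub>R e)"
proof -
  have "M *v y = M *v (\<Sum>e\<in>B. (e \<bullet> y) *\<^sub>R e)" using eigbasis_expand[OF B comp] by (rule arg_cong)
  also have "\<dots> = (\<Sum>e\<in>B. (e \<bullet> y) *\<^sub>R (M *v e))" by (simp add: vec.sum matrix_vector_mult_scaleR)
  also have "\<dots> = (\<Sum>e\<in>B. ((e \<bullet> (M *v e)) * (e \<bullet> y)) *\<^sub>R e)"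
  proof (rule sum.cong)
    fix e assume e: "e \<in> B"
    have "(e \<bullet> y) *\<^sub>R (M *v e) = (e \<bullet> y) *\<^sub>R ((e \<bullet> (M *v e)) *\<^sub>R e)"
      using eigbasis_eig[OF B e] by (rule arg_cong)
    thus "(e \<bullet> y) *\<^sub>R (M *v e) = ((e \<bullet> (M *v e)) * (e \<bullet> y)) *\<^sub>R e" by (simp add: mult.commute)
  qed simp
  finally show ?thesis .
qed


lemma eigbasis_coef:
  assumes B: "eigbasis M B" and e: "e \<in> B"
  shows "e \<bullet> (\<Sum>e'\<in>B. g e' *\<^sub>R e') = g e"
proof -
  have fin: "finite B" using B by (simp add: eigbasis_def)
  have "e \<bullet> (\<Sum>e'\<in>B. g e' *\<^sub>R e') = (\<Sum>e'\<in>B. g e' * (e \<bullet> e'))"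
    by (simp add: inner_sum_right)
  also have "\<dots> = (\<Sum>e'\<in>B. if e' = e then g e else 0)"
  proof (rule sum.cong)
    fix e' assume e': "e' \<in> B"
    show "g e' * (e \<bullet> e') = (if e' = e then g e else 0)"
    proof (cases "e' = e")
      case True
      have "e \<bullet> e = 1" using B e by (simp add: eigbasis_def norm_eq_1)
      thus ?thesis using True by simp
    next
      case False
      have "e \<bullet> e' = 0" using B e e' False unfolding eigbasis_def by metis
      thus ?thesis using False by simp
    qed
  qed simp
  also have "\<dots> = g e" using fin e by simp
  finally show ?thesis .
qed

lemma psd_sqrt_exists:
  fixes Q :: "real^'m^'m"
  assumes "sym_psd Q"
  shows "\<exists>S. sym_psd S \<and> S ** S = Q"
proof -
  have sym: "transpose Q = Q" and psd: "\<And>z. 0 \<le> z \<bullet> (Q *v z)" using assms by (auto simp: sym_psd_def)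
  obtain B where B: "eigbasis Q B" and comp: "\<forall>y. (\<forall>e\<in>B. e \<bullet> y = 0) \<longrightarrow> y = 0"
    using sym_spectral[OF sym] by blast
  define l where "l e = sqrt (e \<bullet> (Q *v e))" for e
  define S :: "real^'m^'m" where "S = (\<chi> i j. \<Sum>e\<in>B. l e * e$i * e$j)"
  have Sv: "S *v y = (\<Sum>e\<in>B. (l e * (e \<bullet> y)) *\<^sub>R e)" for y
  proof -
    have "(S *v y) $ i = (\<Sum>e\<in>B. (l e * (e \<bullet> y)) *\<^sub>R e) $ i" for i
    proof -
      have "(S *v y) $ i = (\<Sum>j\<in>UNIV. (\<Sum>e\<in>B. l e * e$i * e$j) * y$j)"
        by (simp add: S_def matrix_vector_mult_def)
      also have "\<dots> = (\<Sum>j\<in>UNIV. \<Sum>e\<in>B. l e * e$i * e$j * y$j)"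
        by (simp add: sum_distrib_right)
      also have "\<dots> = (\<Sum>e\<in>B. \<Sum>j\<in>UNIV. l e * e$i * e$j * y$j)"
        by (rule sum.swap)
      also have "\<dots> = (\<Sum>e\<in>B. (l e * (e \<bullet> y)) * e$i)"
        by (simp add: inner_vec_def sum_distrib_left sum_distrib_right algebra_simps)
      also have "\<dots> = (\<Sum>e\<in>B. (l e * (e \<bullet> y)) *\<^sub>R e) $ i"
        by (simp add: sum_component)
      finally show ?thesis .
    qed
    thus ?thesis by (simp add: vec_eq_iff)
  qed
  have symS: "transpose S = S"
    by (simp add: S_def transpose_def vec_eq_iff mult.commute mult.left_commute)
  have psdS: "0 \<le> z \<bullet> (S *v z)" for z
  proof -
    have "z \<bullet> (S *v z) = (\<Sum>e\<in>B. l e * (e \<bullet> z) * (z \<bullet> e))"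
      by (simp add: Sv inner_sum_right)
    also have "\<dots> = (\<Sum>e\<in>B. l e * (e \<bullet> z)\<^sup>2)"
      by (simp add: inner_commute power2_eq_square mult.assoc)
    also have "\<dots> \<ge> 0" by (intro sum_nonneg mult_nonneg_nonneg) (auto simp: l_def psd)
    finally show ?thesis .
  qed
  have SS: "S *v (S *v y) = Q *v y" for y
  proof -
    have "S *v (S *v y) = (\<Sum>e\<in>B. (l e * (e \<bullet> (S *v y))) *\<^sub>R e)" by (rule Sv)
    also have "\<dots> = (\<Sum>e\<in>B. ((e \<bullet> (Q *v e)) * (e \<bullet> y)) *\<^sub>R e)"
    proof (rule sum.cong)
      fix e assume e: "e \<in> B"
      have "e \<bullet> (S *v y) = l e * (e \<bullet> y)" unfolding Sv by (rule eigbasis_coef[OF B e])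
      hence "l e * (e \<bullet> (S *v y)) = (l e)\<^sup>2 * (e \<bullet> y)" by (simp add: power2_eq_square)
      also have "(l e)\<^sup>2 = e \<bullet> (Q *v e)" by (simp add: l_def psd)
      finally show "(l e * (e \<bullet> (S *v y))) *\<^sub>R e = ((e \<bullet> (Q *v e)) * (e \<bullet> y)) *\<^sub>R e" by simp
    qed simp
    also have "\<dots> = Q *v y" by (rule eigbasis_apply[OF B comp, symmetric])
    finally show ?thesis .
  qed
  have "S ** S = Q" by (simp add: matrix_eq SS flip: matrix_vector_mul_assoc)
  thus ?thesis using symS psdS by (auto simp: sym_psd_def)
qed

lemma psd_sqrt_unique:
  fixes S T :: "real^'m^'m"
  assumes S: "sym_psd S" and T: "sym_psd T" and eq: "S ** S = T ** T"
  shows "S = T"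
proof -
  have sS: "transpose S = S" and sT: "transpose T = T" using S T by (auto simp: sym_psd_def)
  define M where "M = S - T"
  have sM: "transpose M = M" using sS sT
    by (simp add: M_def transpose_def vec_eq_iff)
  obtain B where B: "eigbasis M B" and comp: "\<forall>y. (\<forall>e\<in>B. e \<bullet> y = 0) \<longrightarrow> y = 0"
    using sym_spectral[OF sM] by blast
  have mu0: "e \<bullet> (M *v e) = 0" if e: "e \<in> B" for e
  proof (rule ccontr)
    define \<mu> where "\<mu> = e \<bullet> (M *v e)"
    assume "e \<bullet> (M *v e) \<noteq> 0"
    hence mu: "\<mu> \<noteq> 0" by (simp add: \<mu>_def)
    have Me: "M *v e = \<mu> *\<^sub>R e" unfolding \<mu>_def by (rule eigbasis_eig[OF B e])
    have "S *v (S *v e) = T *v (T *v e)" by (simp add: matrix_vector_mul_assoc eq)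
    hence "S *v (M *v e) + M *v (T *v e) = 0"
      by (simp add: M_def matrix_vector_mult_diff_rdistrib matrix_vector_right_distrib
          vec.diff)
    hence "\<mu> *\<^sub>R (S *v e) + M *v (T *v e) = 0" by (simp add: Me matrix_vector_mult_scaleR)
    hence "e \<bullet> (\<mu> *\<^sub>R (S *v e) + M *v (T *v e)) = 0" by simp
    moreover have "e \<bullet> (M *v (T *v e)) = \<mu> * (e \<bullet> (T *v e))"
    proof -
      have "e \<bullet> (M *v (T *v e)) = (M *v e) \<bullet> (T *v e)" by (rule sym_inner[OF sM])
      also have "\<dots> = (\<mu> *\<^sub>R e) \<bullet> (T *v e)" using Me by (rule arg_cong)
      finally show ?thesis by simp
    qed
    ultimately have "\<mu> * (e \<bullet> (S *v e) + e \<bullet> (T *v e)) = 0"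
      by (simp add: inner_add_right algebra_simps)
    hence "e \<bullet> (S *v e) + e \<bullet> (T *v e) = 0" using mu by simp
    moreover have "0 \<le> e \<bullet> (S *v e)" "0 \<le> e \<bullet> (T *v e)" using S T by (auto simp: sym_psd_def)
    ultimately have "e \<bullet> (S *v e) = 0" "e \<bullet> (T *v e) = 0" by linarith+
    hence "S *v e = 0" "T *v e = 0" using psd_kernel S T by blast+
    hence "M *v e = 0" by (simp add: M_def matrix_vector_mult_diff_rdistrib)
    hence "\<mu> *\<^sub>R e = 0" using Me by simp
    moreover have "e \<noteq> 0" using B e by (auto simp: eigbasis_def)
    ultimately show False using mu by simp
  qed
  have "M *v y = 0" for y
  proof -
    have "M *v y = (\<Sum>e\<in>B. ((e \<bullet> (M *v e)) * (e \<bullet> y)) *\<^sub>R e)" by (rule eigbasis_apply[OF B comp])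
    also have "\<dots> = 0" using mu0 by (simp)
    finally show ?thesis .
  qed
  hence "S *v y = T *v y" for y by (simp add: M_def matrix_vector_mult_diff_rdistrib)
  thus ?thesis by (simp add: matrix_eq)
qed

lemma psd_sqrt_props:
  fixes Q :: "real^'m^'m"
  assumes "sym_psd Q"
  shows "sym_psd (psd_sqrt Q) \<and> psd_sqrt Q ** psd_sqrt Q = Q"
proof -
  have "\<exists>!S. sym_psd S \<and> S ** S = Q"
    using psd_sqrt_exists[OF assms] psd_sqrt_unique by metis
  thus ?thesis unfolding psd_sqrt_def by (rule theI')
qed

definition comb :: "('n::finite \<Rightarrow> 'a::real_vector) \<Rightarrow> real^'n \<Rightarrow> 'a" where
  "comb p x = (\<Sum>j\<in>UNIV. x$j *\<^sub>R p j)"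

lemma comb_add: "comb p (x + y) = comb p x + comb p y"
  by (simp add: comb_def scaleR_add_left sum.distrib)
lemma comb_scale: "comb p (c *\<^sub>R x) = c *\<^sub>R comb p x"
  by (simp add: comb_def scaleR_sum_right)
lemma comb_diff: "comb p (x - y) = comb p x - comb p y"
  by (simp add: comb_def scaleR_diff_left sum_subtractf)
lemma comb_minus: "comb p (- x) = - comb p x"
  by (simp add: comb_def sum_negf)
lemma comb_zero: "comb p 0 = 0"
  by (simp add: comb_def)
lemma axis_comp: "axis k (1::real) $ i = (if i = k then 1 else 0)"
  by (simp add: axis_def)
lemma comb_axis: "comb p (axis k (1::real)) = p k"
proof -
  have "\<And>j. (axis k (1::real) $ j) *\<^sub>R p j = (if j = k then p k else 0)" by (simp add: axis_comp)
  thus ?thesis by (simp add: comb_def)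
qed

lemma axis_simplex: "axis k (1::real) \<in> std_simplex"
  by (simp add: std_simplex_def axis_comp)

lemma simplex_nonneg: "x \<in> std_simplex \<Longrightarrow> 0 \<le> x $ i"
  by (simp add: std_simplex_def)
lemma simplex_sum: "x \<in> std_simplex \<Longrightarrow> (\<Sum>i\<in>UNIV. x $ i) = 1"
  by (simp add: std_simplex_def)

lemma simplex_seg:
  assumes "x \<in> std_simplex" "z \<in> std_simplex" "0 \<le> t" "t \<le> 1"
  shows "z + t *\<^sub>R (x - z) \<in> std_simplex"
proof -
  have "0 \<le> z$i + t * (x$i - z$i)" for i
  proof -
    have "z$i + t * (x$i - z$i) = (1 - t) * z$i + t * x$i" by (simp add: algebra_simps)
    also have "\<dots> \<ge> 0" using assms simplex_nonneg[OF assms(1), of i] simplex_nonneg[OF assms(2), of i] by simp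
    finally show ?thesis .
  qed
  moreover have "(\<Sum>i\<in>UNIV. z$i + t * (x$i - z$i)) = 1"
    using simplex_sum[OF assms(1)] simplex_sum[OF assms(2)] by (simp add: sum.distrib sum_subtractf sum_distrib_left[symmetric])
  ultimately show ?thesis by (simp add: std_simplex_def)
qed

lemma compact_simplex: "compact (std_simplex :: (real^'n) set)"
proof -
  have "std_simplex = (\<Inter>i. {x::real^'n. 0 \<le> x $ i}) \<inter> {x. (\<Sum>i\<in>UNIV. x $ i) = 1}"
    by (auto simp: std_simplex_def)
  moreover have "closed \<dots>"
  proof -
    have cvn: "\<And>i. continuous_on UNIV (\<lambda>x::real^'n. x$i)"
      by (rule linear_continuous_on[OF bounded_linear_vec_nth])
    have "closed {x::real^'n. (\<Sum>i\<in>UNIV. x $ i) = 1}"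
      by (intro closed_Collect_eq continuous_on_sum cvn continuous_on_const)
    thus ?thesis using closed_halfspace_component_ge_cart by (intro closed_Int closed_INT) auto
  qed
  ultimately have cl: "closed (std_simplex :: (real^'n) set)" by simp
  have "std_simplex \<subseteq> cball (0::real^'n) 1"
  proof
    fix x :: "real^'n" assume x: "x \<in> std_simplex"
    have "norm x \<le> (\<Sum>i\<in>UNIV. \<bar>x $ i\<bar>)" by (rule norm_le_l1_cart)
    also have "\<dots> = 1" using x by (simp add: simplex_nonneg simplex_sum)
    finally show "x \<in> cball 0 1" by simp
  qed
  hence "bounded (std_simplex :: (real^'n) set)" using bounded_cball bounded_subset by blast
  thus ?thesis using cl by (simp add: compact_eq_bounded_closed)
qed

lemma comb_in_hull:
  assumes "x \<in> std_simplex" "convex C" "\<And>j. 0 < x $ j \<Longrightarrow> p j \<in> C"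
  shows "comb p x \<in> C"
proof -
  define J where "J = {j. 0 < x $ j}"
  have "comb p x = (\<Sum>j\<in>J. x$j *\<^sub>R p j)"
    unfolding comb_def J_def
  proof (rule sum.mono_neutral_right)
    show "\<forall>i\<in>UNIV - {j. 0 < x $ j}. x $ i *\<^sub>R p i = 0"
      using simplex_nonneg[OF assms(1)] by (metis DiffD2 mem_Collect_eq order.order_iff_strict scale_zero_left)
  qed auto
  also have "\<dots> \<in> C"
  proof (rule convex_sum)
    show "finite J" by simp
    show "convex C" by fact
    have "sum (\<lambda>j. x $ j) J = (\<Sum>j\<in>UNIV. x $ j)"
      unfolding J_def
    proof (rule sum.mono_neutral_left)
      show "\<forall>i\<in>UNIV - {j. 0 < x $ j}. x $ i = 0"
        using simplex_nonneg[OF assms(1)] by (metis DiffD2 mem_Collect_eq order.order_iff_strict)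
    qed auto
    thus "sum (\<lambda>j. x $ j) J = 1" using assms(1) simplex_sum by simp
    show "\<And>i. i \<in> J \<Longrightarrow> 0 \<le> x $ i" by (auto simp: J_def)
    show "\<And>i. i \<in> J \<Longrightarrow> p i \<in> C" using assms(3) by (auto simp: J_def)
  qed
  finally show ?thesis .
qed

lemma hull_cols: "convex hull (range p) = comb p ` std_simplex"
proof
  show "convex hull range p \<subseteq> comb p ` std_simplex"
  proof (rule hull_minimal)
    show "range p \<subseteq> comb p ` std_simplex"
      using comb_axis axis_simplex by (metis image_subsetI rangeE image_eqI)
    show "convex (comb p ` std_simplex)"
    proof (rule convexI)
      fix a b and u v :: real
      assume a: "a \<in> comb p ` std_simplex" and b: "b \<in> comb p ` std_simplex" and uv: "0 \<le> u" "0 \<le> v" "u + v = 1"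
      obtain x y where x: "x \<in> std_simplex" "a = comb p x" and y: "y \<in> std_simplex" "b = comb p y"
        using a b by auto
      have "comb p (x + v *\<^sub>R (y - x)) = comb p x + v *\<^sub>R (comb p y - comb p x)"
        by (simp add: comb_add comb_scale comb_diff)
      also have "\<dots> = (1 - v) *\<^sub>R comb p x + v *\<^sub>R comb p y" by (simp add: algebra_simps)
      also have "\<dots> = u *\<^sub>R a + v *\<^sub>R b" using uv x(2) y(2) by simp
      finally have "u *\<^sub>R a + v *\<^sub>R b = comb p (x + v *\<^sub>R (y - x))" by simp
      moreover have "x + v *\<^sub>R (y - x) \<in> std_simplex" using simplex_seg[OF y(1) x(1)] uv by simp
      ultimately show "u *\<^sub>R a + v *\<^sub>R b \<in> comb p ` std_simplex" by blast
    qed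
  qed
  show "comb p ` std_simplex \<subseteq> convex hull range p"
    using comb_in_hull[OF _ convex_convex_hull] by (metis hull_inc image_subsetI rangeI)
qed


lemma face_sum_mem:
  fixes T S :: "'a::real_vector set"
  assumes T: "T face_of S" and cS: "convex S" and fin: "finite I" and u0: "\<And>i. i \<in> I \<Longrightarrow> 0 \<le> u i"
    and u1: "sum u I = 1" and qS: "\<And>i. i \<in> I \<Longrightarrow> q i \<in> S" and wT: "(\<Sum>i\<in>I. u i *\<^sub>R q i) \<in> T"
    and k: "k \<in> I" "0 < u k"
  shows "q k \<in> T"
proof -
  define w where "w = (\<Sum>i\<in>I. u i *\<^sub>R q i)"
  have split: "w = u k *\<^sub>R q k + (\<Sum>i\<in>I - {k}. u i *\<^sub>R q i)"
    unfolding w_def using fin k by (simp add: sum.remove)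
  have su: "sum u (I - {k}) = 1 - u k" using fin k u1 by (simp add: sum_diff1)
  have sun: "0 \<le> sum u (I - {k})" by (rule sum_nonneg) (use u0 in auto)
  show ?thesis
  proof (cases "u k = 1")
    case True
    hence "sum u (I - {k}) = 0" using su by simp
    moreover have "finite (I - {k})" using fin by simp
    ultimately have "\<forall>i\<in>I - {k}. u i = 0" using u0 sum_nonneg_eq_0_iff[of "I - {k}" u] by blast
    hence "(\<Sum>i\<in>I - {k}. u i *\<^sub>R q i) = 0" by simp
    hence "w = q k" using split True by simp
    thus ?thesis using wT w_def by simp
  next
    case False
    hence uk1: "u k < 1" using su sun by linarith
    define r where "r = (\<Sum>i\<in>I - {k}. (u i / (1 - u k)) *\<^sub>R q i)"
    have rS: "r \<in> S" unfolding r_def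
    proof (rule convex_sum)
      show "finite (I - {k})" using fin by simp
      show "convex S" by fact
      show "(\<Sum>i\<in>I - {k}. u i / (1 - u k)) = 1" using su uk1 by (simp add: sum_divide_distrib[symmetric])
      show "\<And>i. i \<in> I - {k} \<Longrightarrow> 0 \<le> u i / (1 - u k)" using u0 uk1 by simp
      show "\<And>i. i \<in> I - {k} \<Longrightarrow> q i \<in> S" using qS by simp
    qed
    have "(1 - u k) *\<^sub>R r = (\<Sum>i\<in>I - {k}. u i *\<^sub>R q i)"
      unfolding r_def using uk1 by (simp add: scaleR_sum_right)
    hence wseg: "w = (1 - u k) *\<^sub>R r + u k *\<^sub>R q k" using split by simp
    show ?thesis
    proof (cases "r = q k")
      case True
      hence "w = q k" using wseg by (simp add: algebra_simps flip: scaleR_add_left)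
      thus ?thesis using wT w_def by simp
    next
      case False
      hence "w \<in> open_segment r (q k)" using wseg k uk1 by (auto simp: in_segment)
      thus ?thesis using face_ofD[OF T _ rS qS[OF k(1)]] wT w_def by blast
    qed
  qed
qed

lemma face_comb_mem:
  fixes p :: "'n::finite \<Rightarrow> 'a::real_vector"
  assumes T: "T face_of S" and cS: "convex S" and x: "x \<in> std_simplex" and pS: "\<And>j. p j \<in> S"
    and wT: "comb p x \<in> T" and k: "0 < x $ k"
  shows "p k \<in> T"
  using face_sum_mem[OF T cS finite[of "UNIV :: 'n set"], of "\<lambda>j. x $ j" p k] x wT k pS
  by (simp add: comb_def simplex_nonneg simplex_sum)

lemma vnorm_nonneg: "0 \<le> vnorm v d"
  by (simp add: vnorm_def)

lemma vnorm_pos: "d \<noteq> 0 \<Longrightarrow> 0 < vnorm v d"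
proof -
  assume d: "d \<noteq> 0"
  obtain a t where dat: "d = (a, t)" by (cases d)
  have "(norm a)\<^sup>2 + \<bar>v \<bullet> a + t\<bar> \<noteq> 0"
  proof
    assume "(norm a)\<^sup>2 + \<bar>v \<bullet> a + t\<bar> = 0"
    hence "(norm a)\<^sup>2 = 0" "\<bar>v \<bullet> a + t\<bar> = 0" by (smt (verit) zero_le_power2 abs_ge_zero)+
    hence "a = 0" "t = 0" by auto
    thus False using d dat by (simp add: zero_prod_def)
  qed
  moreover have "0 \<le> (norm a)\<^sup>2 + \<bar>v \<bullet> a + t\<bar>" by simp
  ultimately have "0 < (norm a)\<^sup>2 + \<bar>v \<bullet> a + t\<bar>" by linarith
  thus ?thesis by (simp add: vnorm_def dat)
qed

lemma vnorm_uminus: "vnorm v (- d) = vnorm v d"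
proof -
  have "\<bar>v \<bullet> fst (- d) + snd (- d)\<bar> = \<bar>v \<bullet> fst d + snd d\<bar>"
    by (simp add: inner_minus_right abs_minus_commute)
  thus ?thesis by (simp add: vnorm_def)
qed

lemma vnorm_cont: "continuous_on X (\<lambda>d. vnorm v d)"
  unfolding vnorm_def by (intro continuous_intros)

lemma vnorm_scale:
  assumes "0 \<le> s" "s \<le> 1"
  shows "(s * vnorm v d)\<^sup>2 \<le> (vnorm v (s *\<^sub>R d))\<^sup>2"
proof -
  have "(s * vnorm v d)\<^sup>2 = s\<^sup>2 * ((norm (fst d))\<^sup>2 + \<bar>v \<bullet> fst d + snd d\<bar>)"
    by (simp add: vnorm_def power_mult_distrib)
  also have "\<dots> = s\<^sup>2 * (norm (fst d))\<^sup>2 + s * (s * \<bar>v \<bullet> fst d + snd d\<bar>)"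
    by (simp add: algebra_simps power2_eq_square)
  also have "\<dots> \<le> s\<^sup>2 * (norm (fst d))\<^sup>2 + s * \<bar>v \<bullet> fst d + snd d\<bar>"
    using assms by (simp add: mult_left_le_one_le mult_left_mono)
  also have "\<dots> = (vnorm v (s *\<^sub>R d))\<^sup>2"
  proof -
    have e1: "v \<bullet> fst (s *\<^sub>R d) + snd (s *\<^sub>R d) = s * (v \<bullet> fst d + snd d)" by (simp add: algebra_simps)
    have e2: "\<bar>s * (v \<bullet> fst d + snd d)\<bar> = s * \<bar>v \<bullet> fst d + snd d\<bar>" using assms by (simp add: abs_mult)
    have e3: "(norm (fst (s *\<^sub>R d)))\<^sup>2 = s\<^sup>2 * (norm (fst d))\<^sup>2" using assms by (simp add: power_mult_distrib)
    show ?thesis unfolding vnorm_def using e1 e2 e3 by simp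
  qed
  finally show ?thesis .
qed

lemma distv_pos:
  fixes p :: "'n::finite \<Rightarrow> (real^'m) \<times> real"
  assumes G: "G face_of convex hull (range p)" and Gne: "G \<noteq> {}" and GP: "G \<noteq> convex hull (range p)"
  shows "0 < dist_v v G (convex hull (range p - G))"
proof -
  define P where "P = convex hull (range p)"
  define H where "H = convex hull (range p - G)"
  have cP: "compact P" "convex P" unfolding P_def by (simp_all add: compact_convex_hull finite_imp_compact)
  have cG: "compact G" using face_of_imp_compact[OF cP(2) cP(1)] G by (simp add: P_def)
  have cH: "compact H" unfolding H_def by (simp add: compact_convex_hull finite_imp_compact)
  have GsubP: "G \<subseteq> P" using G face_of_imp_subset P_def by blast
  have Rne: "range p - G \<noteq> {}"
  proof
    assume "range p - G = {}"
    hence "range p \<subseteq> G" by blast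
    hence "P \<subseteq> G" unfolding P_def using G face_of_imp_convex hull_minimal by blast
    thus False using GsubP GP P_def by blast
  qed
  hence Hne: "H \<noteq> {}" unfolding H_def by simp
  have disj: "G \<inter> H = {}"
  proof (rule ccontr)
    assume "G \<inter> H \<noteq> {}"
    then obtain w where wG: "w \<in> G" and wH: "w \<in> H" by blast
    have finR: "finite (range p - G)" by simp
    obtain u where u0: "\<forall>x\<in>range p - G. 0 \<le> u x" and u1: "sum u (range p - G) = 1"
      and uw: "(\<Sum>x\<in>range p - G. u x *\<^sub>R x) = w"
      using wH unfolding H_def convex_hull_finite[OF finR] by blast
    obtain k where k: "k \<in> range p - G" "0 < u k"
    proof (rule ccontr)
      assume "\<not> thesis"
      hence "\<forall>x\<in>range p - G. u x = 0" using u0 that by force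
      hence "sum u (range p - G) = 0" by simp
      thus False using u1 by simp
    qed
    have "id k \<in> G"
      by (rule face_sum_mem[OF G convex_convex_hull finR, of u id k])
        (use u0 u1 uw wG k in \<open>auto intro: hull_inc\<close>)
    thus False using k by simp
  qed
  have cGH: "compact (G \<times> H)" using cG cH by (rule compact_Times)
  have neGH: "G \<times> H \<noteq> {}" using Gne Hne by simp
  have cont: "continuous_on (G \<times> H) (\<lambda>pr. vnorm v (fst pr - snd pr))"
    using vnorm_cont[of "(\<lambda>pr. fst pr - snd pr) ` (G \<times> H)" v]
    by (intro continuous_on_compose2[OF vnorm_cont] continuous_intros) auto
  obtain pr0 where pr0: "pr0 \<in> G \<times> H" and pmin: "\<And>pr. pr \<in> G \<times> H \<Longrightarrow> vnorm v (fst pr0 - snd pr0) \<le> vnorm v (fst pr - snd pr)"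
    using continuous_attains_inf[OF cGH neGH cont] by blast
  have "fst pr0 \<noteq> snd pr0" using pr0 disj by (auto simp: mem_Times_iff)
  hence pos: "0 < vnorm v (fst pr0 - snd pr0)" by (intro vnorm_pos) simp
  have "vnorm v (fst pr0 - snd pr0) \<le> dist_v v G H"
    unfolding dist_v_def by (rule cINF_greatest[OF neGH pmin])
  thus ?thesis using pos by (simp add: H_def)
qed

definition lin :: "real^'m \<Rightarrow> (real^'m) \<times> real \<Rightarrow> real" where
  "lin v w = v \<bullet> fst w + snd w"

lemma lin_inner: "lin v w = (v, 1) \<bullet> w"
  by (cases w) (simp add: lin_def inner_Pair)

lemma cont_comb: fixes p :: "'n::finite \<Rightarrow> 'a::real_normed_vector" shows "continuous_on X (comb p)"
proof -
  have cvn: "\<And>i. continuous_on X (\<lambda>x::real^'n. x$i)"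
    by (rule linear_continuous_on[OF bounded_linear_vec_nth])
  show ?thesis unfolding comb_def[abs_def]
    by (intro continuous_on_sum continuous_on_scaleR cvn continuous_on_const)
qed

lemma cont_l1: fixes x :: "real^'n" shows "continuous_on X (l1dist x)"
proof -
  have cvn: "\<And>i. continuous_on X (\<lambda>x::real^'n. x$i)"
    by (rule linear_continuous_on[OF bounded_linear_vec_nth])
  show ?thesis unfolding l1dist_def[abs_def]
    by (intro continuous_on_sum continuous_intros cvn)
qed

lemma l1dist_nonneg: "0 \<le> l1dist x z"
  by (simp add: l1dist_def sum_nonneg)

context
  fixes p :: "'n::finite \<Rightarrow> (real^'m) \<times> real" and F :: "real^'n \<Rightarrow> real"
    and v :: "real^'m" and z0 :: "real^'n"
  assumes z0: "z0 \<in> std_simplex"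
    and hF: "\<And>x. x \<in> std_simplex \<Longrightarrow> 2 * (F x - F z0) = (vnorm v (comb p x - comb p z0))\<^sup>2"
    and hl: "\<And>x. x \<in> std_simplex \<Longrightarrow> lin v (comb p z0) \<le> lin v (comb p x)"
begin

lemma P_eq: "convex hull (range p) = comb p ` std_simplex"
  by (rule hull_cols)

lemma y_in_P: "comb p z0 \<in> convex hull (range p)"
  using P_eq z0 by blast

lemma Fv_eq: "Fv v p = convex hull (range p) \<inter> {w. (v, 1) \<bullet> w = lin v (comb p z0)}"
proof -
  have "w \<in> Fv v p \<longleftrightarrow> w \<in> convex hull (range p) \<and> lin v w = lin v (comb p z0)" for w
  proof
    assume w: "w \<in> Fv v p"
    hence wP: "w \<in> convex hull (range p)" and le: "\<And>w'. w' \<in> convex hull (range p) \<Longrightarrow> lin v w \<le> lin v w'"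
      by (auto simp: Fv_def cols_def lin_def)
    obtain x where "x \<in> std_simplex" "w = comb p x" using wP P_eq by auto
    hence "lin v (comb p z0) \<le> lin v w" using hl by simp
    moreover have "lin v w \<le> lin v (comb p z0)" using le y_in_P by blast
    ultimately show "w \<in> convex hull (range p) \<and> lin v w = lin v (comb p z0)" using wP by simp
  next
    assume w: "w \<in> convex hull (range p) \<and> lin v w = lin v (comb p z0)"
    have "lin v w \<le> lin v w'" if w'P: "w' \<in> convex hull (range p)" for w'
    proof -
      obtain x where "x \<in> std_simplex" "w' = comb p x" using w'P P_eq by auto
      thus ?thesis using hl w by simp
    qed
    thus "w \<in> Fv v p" using w by (auto simp: Fv_def cols_def lin_def)
  qed
  thus ?thesis by (auto simp: lin_inner)
qed

lemma Fv_face: "Fv v p face_of convex hull (range p)"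
  unfolding Fv_eq
proof (rule face_of_Int_supporting_hyperplane_ge)
  show "convex (convex hull range p)" by simp
  fix w assume "w \<in> convex hull range p"
  then obtain x where "x \<in> std_simplex" "w = comb p x" using P_eq by auto
  thus "lin v (comb p z0) \<le> (v, 1) \<bullet> w" using hl by (simp add: lin_inner)
qed

lemma y_in_Fv: "comb p z0 \<in> Fv v p"
  using y_in_P by (simp add: Fv_eq lin_inner)

lemma Z_char: "z \<in> std_simplex \<Longrightarrow> F z = F z0 \<longleftrightarrow> comb p z = comb p z0"
proof -
  assume z: "z \<in> std_simplex"
  have "F z = F z0 \<longleftrightarrow> (vnorm v (comb p z - comb p z0))\<^sup>2 = 0" using hF[OF z] by auto
  also have "\<dots> \<longleftrightarrow> comb p z - comb p z0 = 0"
    using vnorm_pos[of "comb p z - comb p z0" v] by (cases "comb p z - comb p z0 = 0") (auto simp: vnorm_def)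
  finally show ?thesis by simp
qed

lemma Phi_props:
  assumes pij: "p i \<noteq> p j"
  shows "0 < Phi v p"
    and "\<And>G. G face_of Fv v p \<Longrightarrow> G \<noteq> {} \<Longrightarrow> G \<noteq> convex hull (range p)
           \<Longrightarrow> Phi v p \<le> dist_v v G (convex hull (range p - G))"
proof -
  define P where "P = convex hull (range p)"
  define T where "T = {dist_v v G (convex hull (range p - G)) | G. G face_of Fv v p \<and> G \<noteq> {} \<and> G \<noteq> P}"
  have PhiT: "Phi v p = Inf T" by (simp add: Phi_def T_def cols_def P_def)
  have polyP: "polytope P" unfolding P_def polytope_def by (intro exI[of _ "range p"]) simp
  have cP: "compact P" "convex P" unfolding P_def by (simp_all add: compact_convex_hull finite_imp_compact)
  have FvP: "Fv v p face_of P" using Fv_face by (simp add: P_def)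
  have "T \<subseteq> (\<lambda>G. dist_v v G (convex hull (range p - G))) ` {G. G face_of P}"
  proof
    fix t assume "t \<in> T"
    then obtain G where G: "G face_of Fv v p" "t = dist_v v G (convex hull (range p - G))"
      unfolding T_def by blast
    have "G face_of P" using face_of_trans[OF G(1) FvP] .
    thus "t \<in> (\<lambda>G. dist_v v G (convex hull (range p - G))) ` {G. G face_of P}" using G(2) by blast
  qed
  hence finT: "finite T" by (rule finite_subset) (use finite_polytope_faces[OF polyP] in simp)
  have posT: "\<forall>t\<in>T. 0 < t"
  proof
    fix t assume "t \<in> T"
    then obtain G where G: "G face_of Fv v p" "G \<noteq> {}" "G \<noteq> P" "t = dist_v v G (convex hull (range p - G))"
      unfolding T_def by blast
    have "G face_of convex hull (range p)" using face_of_trans[OF G(1) FvP] by (simp add: P_def)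
    from distv_pos[OF this G(2)] G(3,4) show "0 < t" by (simp add: P_def)
  qed
  have cFv: "compact (Fv v p)" using face_of_imp_compact[OF cP(2) cP(1) FvP] .
  have convFv: "convex (Fv v p)" using FvP face_of_imp_convex by blast
  have neFv: "Fv v p \<noteq> {}" using y_in_Fv by blast
  obtain e where e: "e extreme_point_of Fv v p" using extreme_point_exists_convex[OF cFv convFv neFv] by blast
  have eface: "{e} face_of Fv v p" using e face_of_singleton by blast
  have "{e} \<noteq> P"
  proof
    assume "{e} = P"
    moreover have "p i \<in> P" "p j \<in> P" unfolding P_def by (auto intro: hull_inc)
    ultimately show False using pij by (metis singletonD)
  qed
  hence "dist_v v {e} (convex hull (range p - {e})) \<in> T" unfolding T_def using eface by blast
  hence neT: "T \<noteq> {}" by blast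
  show "0 < Phi v p" unfolding PhiT using cInf_eq_Min[OF finT neT] Min_gr_iff[OF finT neT] posT by simp
  show "Phi v p \<le> dist_v v G (convex hull (range p - G))"
    if "G face_of Fv v p" "G \<noteq> {}" "G \<noteq> convex hull (range p)" for G
  proof -
    have "dist_v v G (convex hull (range p - G)) \<in> T" unfolding T_def P_def using that by auto
    thus ?thesis unfolding PhiT using finT by (simp add: cInf_lower bdd_below_finite)
  qed
qed

lemma main_ineq:
  assumes pij: "p i \<noteq> p j" and x: "x \<in> std_simplex" and xZ: "F x \<noteq> F z0"
  shows "(Phi v p)\<^sup>2 / 4 \<le> 2 * (F x - F z0) / (INF z\<in>{z\<in>std_simplex. F z = F z0}. l1dist x z)\<^sup>2"
proof -
  define P where "P = convex hull (range p)"
  define y where "y = comb p z0"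
  define Z where "Z = {z\<in>std_simplex. F z = F z0}"
  have Zc: "Z = std_simplex \<inter> {z. comb p z = y}" using Z_char by (auto simp: Z_def y_def)
  have cZ: "compact Z" unfolding Zc
    by (intro compact_Int_closed compact_simplex closed_Collect_eq cont_comb continuous_on_const)
  have z0Z: "z0 \<in> Z" using z0 by (simp add: Z_def)
  hence neZ: "Z \<noteq> {}" by blast
  obtain z where zZ: "z \<in> Z" and zmin: "\<And>z'. z' \<in> Z \<Longrightarrow> l1dist x z \<le> l1dist x z'"
    using continuous_attains_inf[OF cZ neZ cont_l1] by blast
  have z: "z \<in> std_simplex" and Fz: "F z = F z0" and yz: "comb p z = y" using zZ Zc by (auto simp: Z_def)
  have dZ: "(INF z\<in>Z. l1dist x z) = l1dist x z"
  proof (rule antisym)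
    show "(INF z\<in>Z. l1dist x z) \<le> l1dist x z"
      by (rule cINF_lower[OF _ zZ]) (auto intro: bdd_belowI[of _ 0] simp: l1dist_nonneg)
    show "l1dist x z \<le> (INF z\<in>Z. l1dist x z)" by (rule cINF_greatest[OF neZ zmin])
  qed
  define d where "d = x - z"
  define pos where "pos j = max (d$j) 0" for j
  define neg where "neg j = max (- d$j) 0" for j
  define s where "s = (\<Sum>j\<in>UNIV. pos j)"
  have dpn: "d$j = pos j - neg j" for j by (simp add: pos_def neg_def max_def)
  have absd: "\<bar>d$j\<bar> = pos j + neg j" for j by (simp add: pos_def neg_def max_def)
  have pos0: "0 \<le> pos j" and neg0: "0 \<le> neg j" for j by (simp_all add: pos_def neg_def)
  have sumd: "(\<Sum>j\<in>UNIV. d$j) = 0"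
    using simplex_sum[OF x] simplex_sum[OF z] by (simp add: d_def sum_subtractf)
  have sneg: "(\<Sum>j\<in>UNIV. neg j) = s"
    using sumd by (simp add: dpn sum_subtractf s_def)
  have l1: "l1dist x z = 2 * s"
  proof -
    have "l1dist x z = (\<Sum>j\<in>UNIV. \<bar>d$j\<bar>)" by (simp add: l1dist_def d_def)
    also have "\<dots> = (\<Sum>j\<in>UNIV. pos j) + (\<Sum>j\<in>UNIV. neg j)" by (simp add: absd sum.distrib)
    finally show ?thesis using sneg by (simp add: s_def)
  qed
  have xz: "x \<noteq> z" using xZ Fz by auto
  have "l1dist x z \<noteq> 0"
  proof
    assume "l1dist x z = 0"
    hence "\<forall>j\<in>UNIV. \<bar>x$j - z$j\<bar> = 0" unfolding l1dist_def
      by (subst sum_nonneg_eq_0_iff[symmetric]) auto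
    hence "x = z" by (simp add: vec_eq_iff)
    thus False using xz by simp
  qed
  hence spos: "0 < s" using l1 l1dist_nonneg[of x z] by simp
  have posx: "pos j \<le> x$j" for j
    using simplex_nonneg[OF x, of j] simplex_nonneg[OF z, of j] by (simp add: pos_def d_def)
  have negz: "neg j \<le> z$j" for j
    using simplex_nonneg[OF x, of j] simplex_nonneg[OF z, of j] by (simp add: neg_def d_def)
  have s1: "s \<le> 1"
  proof -
    have "s \<le> (\<Sum>j\<in>UNIV. x$j)" unfolding s_def by (rule sum_mono) (rule posx)
    thus ?thesis using simplex_sum[OF x] by simp
  qed
  define \<alpha> :: "real^'n" where "\<alpha> = (\<chi> j. pos j / s)"
  define \<beta> :: "real^'n" where "\<beta> = (\<chi> j. neg j / s)"
  have \<alpha>S: "\<alpha> \<in> std_simplex"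
    using spos pos0 by (simp add: std_simplex_def \<alpha>_def sum_divide_distrib[symmetric] s_def)
  have \<beta>S: "\<beta> \<in> std_simplex"
    using spos neg0 sneg by (simp add: std_simplex_def \<beta>_def sum_divide_distrib[symmetric])
  have dab: "d = s *\<^sub>R (\<alpha> - \<beta>)"
    using spos by (simp add: vec_eq_iff \<alpha>_def \<beta>_def dpn diff_divide_distrib[symmetric])
  define a where "a = comb p \<alpha>"
  define b where "b = comb p \<beta>"
  have diffxy: "comb p x - y = s *\<^sub>R (a - b)"
  proof -
    have "comb p x - y = comb p d" using yz by (simp add: d_def comb_diff)
    also have "\<dots> = s *\<^sub>R (a - b)" by (simp add: dab comb_scale comb_diff a_def b_def)
    finally show ?thesis .
  qed
  have cP: "convex P" by (simp add: P_def)
  have bP: "b \<in> P" using \<beta>S P_eq by (auto simp: b_def P_def)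
  define G where "G = \<Inter>{K. K face_of P \<and> b \<in> K}"
  have Gface: "G face_of P" unfolding G_def
    by (rule face_of_Inter) (use face_of_refl[OF cP] bP in auto)
  have bG: "b \<in> G" unfolding G_def by blast
  have Gmin: "\<And>K. K face_of P \<Longrightarrow> b \<in> K \<Longrightarrow> G \<subseteq> K" unfolding G_def by blast
  have GP: "G \<subseteq> P" using Gface face_of_imp_subset by blast
  have brel: "b \<in> rel_interior G"
  proof (rule ccontr)
    assume nb: "b \<notin> rel_interior G"
    have polyP: "polytope P" unfolding P_def polytope_def by (intro exI[of _ "range p"]) simp
    have "polyhedron G" using face_of_polytope_polytope[OF polyP Gface] polytope_imp_polyhedron by blast
    from rel_interior_of_polyhedron[OF this] nb bG obtain K where K: "K facet_of G" "b \<in> K" by blast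
    have KG: "K face_of G" and Kaff: "aff_dim K = aff_dim G - 1" using K(1) by (auto simp: facet_of_def)
    have "K face_of P" using face_of_trans[OF KG Gface] .
    hence "G \<subseteq> K" using Gmin K(2) by blast
    moreover have "K \<subseteq> G" using KG face_of_imp_subset by blast
    ultimately have "K = G" by blast
    thus False using Kaff by simp
  qed
  have FvP: "Fv v p face_of P" using Fv_face by (simp add: P_def)
  have pFv: "p j \<in> Fv v p" if "0 < z$j" for j
  proof -
    have pP: "\<And>j. p j \<in> P" by (simp add: P_def hull_inc)
    have "comb p z \<in> Fv v p" using yz y_in_Fv by (simp add: y_def)
    from face_comb_mem[OF FvP cP z pP this that] show ?thesis .
  qed
  have bFv: "b \<in> Fv v p" unfolding b_def
  proof (rule comb_in_hull[OF \<beta>S])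
    show "convex (Fv v p)" using FvP face_of_imp_convex by blast
    fix j assume "0 < \<beta> $ j"
    hence "0 < neg j" using spos by (simp add: \<beta>_def zero_less_divide_iff)
    hence "0 < z$j" using negz[of j] by simp
    thus "p j \<in> Fv v p" by (rule pFv)
  qed
  have GFv: "G \<subseteq> Fv v p" using Gmin[OF FvP bFv] .
  have Gface2: "G face_of Fv v p" using face_of_subset[OF Gface GFv] FvP face_of_imp_subset by blast
  have pk_notin: "p k \<notin> G" if dk: "0 < d$k" for k
  proof
    assume pkG: "p k \<in> G"
    obtain e where e: "0 < e" "cball b e \<inter> affine hull G \<subseteq> G"
      using brel mem_rel_interior_cball by blast
    define \<eta> where "\<eta> = e / (norm (b - p k) + 1)"
    have n1: "0 < norm (b - p k) + 1" by (simp add: add_nonneg_pos)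
    have \<eta>0: "0 < \<eta>" unfolding \<eta>_def using e(1) n1 by (rule divide_pos_pos)
    have "\<eta> * norm (b - p k) \<le> e"
    proof -
      have "\<eta> * norm (b - p k) = e * (norm (b - p k) / (norm (b - p k) + 1))" by (simp add: \<eta>_def)
      also have "\<dots> \<le> e * 1" using e n1 by (intro mult_left_mono) auto
      finally show ?thesis by simp
    qed
    define q where "q = (1 + \<eta>) *\<^sub>R b + (- \<eta>) *\<^sub>R p k"
    have qaff: "q \<in> affine hull G" unfolding q_def
      by (rule mem_affine[OF affine_affine_hull hull_inc[OF bG] hull_inc[OF pkG]]) simp
    have "dist b q = \<eta> * norm (b - p k)"
    proof -
      have "b - q = (- \<eta>) *\<^sub>R (b - p k)" by (simp add: q_def algebra_simps)
      thus ?thesis using \<eta>0 by (simp add: dist_norm)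
    qed
    hence "q \<in> cball b e" using \<open>\<eta> * norm (b - p k) \<le> e\<close> by simp
    hence qG: "q \<in> G" using e qaff by blast
    obtain \<kappa> where \<kappa>: "\<kappa> \<in> std_simplex" "q = comb p \<kappa>" using qG GP P_eq P_def by auto
    define \<delta> where "\<delta> = min s (d$k)"
    have \<delta>0: "0 < \<delta>" using spos dk by (simp add: \<delta>_def)
    define c :: "real^'n" where "c = (1 / (1 + \<eta>)) *\<^sub>R (\<eta> *\<^sub>R axis k 1 + \<kappa>) - \<beta>"
    define z' where "z' = z + \<delta> *\<^sub>R c"
    have combc: "comb p c = 0"
    proof -
      have "comb p c = (1 / (1 + \<eta>)) *\<^sub>R (\<eta> *\<^sub>R p k + q) - b"
        by (simp add: c_def comb_diff comb_add comb_scale comb_axis \<kappa>(2) b_def)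
      also have "\<eta> *\<^sub>R p k + q = (1 + \<eta>) *\<^sub>R b" by (simp add: q_def algebra_simps)
      finally show ?thesis using \<eta>0 by simp
    qed
    have z'y: "comb p z' = y" by (simp add: z'_def comb_add comb_scale combc yz)
    have cj: "c$j = (\<eta> * (if j = k then 1 else 0) + \<kappa>$j) / (1 + \<eta>) - neg j / s" for j
      by (simp add: c_def \<beta>_def axis_comp)
    have z'S: "z' \<in> std_simplex"
    proof -
      have "0 \<le> z'$j" for j
      proof -
        have "\<delta> * (neg j / s) \<le> neg j"
        proof -
          have "\<delta> * (neg j / s) = (\<delta> / s) * neg j" by simp
          also have "\<dots> \<le> 1 * neg j" using \<delta>0 spos neg0[of j] by (intro mult_right_mono) (auto simp: \<delta>_def)
          finally show ?thesis by simp
        qed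
        moreover have "0 \<le> \<delta> * ((\<eta> * (if j = k then 1 else 0) + \<kappa>$j) / (1 + \<eta>))"
          using \<delta>0 \<eta>0 simplex_nonneg[OF \<kappa>(1), of j] by simp
        ultimately show ?thesis using negz[of j] by (simp add: z'_def cj algebra_simps)
      qed
      moreover have "(\<Sum>j\<in>UNIV. z'$j) = 1"
      proof -
        have ax1: "\<And>j. \<eta> * (if j = k then 1 else 0) = (if j = k then \<eta> else 0)" by simp
        have axs: "(\<Sum>j\<in>UNIV. \<eta> * (if j = k then 1 else 0)) = \<eta>" by (simp only: ax1) simp
        have "(\<Sum>j\<in>UNIV. c$j) = (\<eta> + 1) / (1 + \<eta>) - 1"
          using simplex_sum[OF \<kappa>(1)] simplex_sum[OF \<beta>S] axs
          by (simp add: c_def sum_subtractf sum.distrib axis_comp sum_divide_distrib[symmetric]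
              scaleR_sum_right[symmetric])
        hence "(\<Sum>j\<in>UNIV. c$j) = 0" using \<eta>0 by simp
        thus ?thesis using simplex_sum[OF z] by (simp add: z'_def sum.distrib sum_distrib_left[symmetric])
      qed
      ultimately show ?thesis by (simp add: std_simplex_def)
    qed
    have z'Z: "z' \<in> Z" using z'S z'y Zc by blast
    have comp: "\<bar>x$j - z'$j\<bar> \<le> \<bar>d$j\<bar> - \<delta> * (neg j / s) - \<delta> * \<eta> * (if j = k then 1 else 0) / (1 + \<eta>)
                 + \<delta> * \<kappa>$j / (1 + \<eta>)" for j
    proof -
      define r where "r = d$j + \<delta> * (neg j / s) - \<delta> * \<eta> * (if j = k then 1 else 0) / (1 + \<eta>)"
      have xz': "x$j - z'$j = r - \<delta> * \<kappa>$j / (1 + \<eta>)"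
        by (simp add: z'_def cj r_def d_def algebra_simps add_divide_distrib diff_divide_distrib)
      have kj: "0 \<le> \<delta> * \<kappa>$j / (1 + \<eta>)" using \<delta>0 \<eta>0 simplex_nonneg[OF \<kappa>(1), of j] by simp
      have rabs: "\<bar>r\<bar> = \<bar>d$j\<bar> - \<delta> * (neg j / s) - \<delta> * \<eta> * (if j = k then 1 else 0) / (1 + \<eta>)"
      proof (cases "d$j < 0")
        case True
        hence jk: "j \<noteq> k" using dk by auto
        have nj: "neg j = - d$j" and pj: "pos j = 0" using True by (auto simp: neg_def pos_def)
        have "\<delta> / s \<le> 1" using \<delta>0 spos by (simp add: \<delta>_def)
        hence "(\<delta> / s) * neg j \<le> 1 * neg j" using neg0[of j] by (rule mult_right_mono)
        hence "\<delta> * (neg j / s) \<le> neg j" by simp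
        hence "r \<le> 0" using True jk nj by (simp add: r_def)
        thus ?thesis using True jk nj by (simp add: r_def)
      next
        case False
        hence nj: "neg j = 0" by (simp add: neg_def)
        show ?thesis
        proof (cases "j = k")
          case True
          have "\<eta> / (1 + \<eta>) \<le> 1" using \<eta>0 by simp
          hence "\<delta> * (\<eta> / (1 + \<eta>)) \<le> \<delta> * 1" using \<delta>0 by (intro mult_left_mono) auto
          hence "\<delta> * \<eta> / (1 + \<eta>) \<le> \<delta>" by simp
          also have "\<delta> \<le> d$k" by (simp add: \<delta>_def)
          finally have "0 \<le> d$j - \<delta> * \<eta> / (1 + \<eta>)" using True by simp
          thus ?thesis using True nj False by (simp add: r_def)
        next
          case False
          thus ?thesis using nj \<open>\<not> d$j < 0\<close> by (simp add: r_def)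
        qed
      qed
      have "\<bar>x$j - z'$j\<bar> \<le> \<bar>r\<bar> + \<delta> * \<kappa>$j / (1 + \<eta>)" using xz' kj by linarith
      thus ?thesis using rabs by simp
    qed
    have "l1dist x z' \<le> (\<Sum>j\<in>UNIV. \<bar>d$j\<bar> - \<delta> * (neg j / s) - \<delta> * \<eta> * (if j = k then 1 else 0) / (1 + \<eta>)
                 + \<delta> * \<kappa>$j / (1 + \<eta>))"
      unfolding l1dist_def by (rule sum_mono) (rule comp)
    also have "\<dots> = l1dist x z - \<delta> * ((\<Sum>j\<in>UNIV. neg j) / s) - \<delta> * \<eta> / (1 + \<eta>) + \<delta> * (\<Sum>j\<in>UNIV. \<kappa>$j) / (1 + \<eta>)"
    proof -
      have t1: "(\<Sum>j\<in>UNIV. \<delta> * (neg j / s)) = \<delta> * ((\<Sum>j\<in>UNIV. neg j) / s)"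
        by (simp add: sum_distrib_left sum_divide_distrib)
      have t2a: "\<And>j. \<delta> * \<eta> * (if j = k then 1 else 0) / (1 + \<eta>) = (if j = k then \<delta> * \<eta> / (1 + \<eta>) else 0)"
        by simp
      have t2: "(\<Sum>j\<in>UNIV. \<delta> * \<eta> * (if j = k then 1 else 0) / (1 + \<eta>)) = \<delta> * \<eta> / (1 + \<eta>)"
        by (simp only: t2a) simp
      have t3: "(\<Sum>j\<in>UNIV. \<delta> * \<kappa>$j / (1 + \<eta>)) = \<delta> * (\<Sum>j\<in>UNIV. \<kappa>$j) / (1 + \<eta>)"
        by (simp add: sum_distrib_left sum_divide_distrib)
      have t0: "(\<Sum>j\<in>UNIV. \<bar>d$j\<bar>) = l1dist x z" by (simp add: l1dist_def d_def)
      show ?thesis by (simp only: sum.distrib sum_subtractf t0 t1 t2 t3)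
    qed
    also have "\<dots> = l1dist x z - \<delta> - \<delta> * \<eta> / (1 + \<eta>) + \<delta> / (1 + \<eta>)"
      using sneg spos simplex_sum[OF \<kappa>(1)] by simp
    also have "\<dots> = l1dist x z - 2 * \<delta> * \<eta> / (1 + \<eta>)"
    proof -
      have w: "1 + \<eta> \<noteq> 0" using \<eta>0 by simp
      have "\<delta> / (1 + \<eta>) + \<delta> * \<eta> / (1 + \<eta>) = \<delta> * (1 + \<eta>) / (1 + \<eta>)"
        by (simp add: add_divide_distrib[symmetric] algebra_simps)
      also have "\<dots> = \<delta>" using w by simp
      finally have e1: "\<delta> / (1 + \<eta>) + \<delta> * \<eta> / (1 + \<eta>) = \<delta>" .
      have e2: "2 * \<delta> * \<eta> / (1 + \<eta>) = 2 * (\<delta> * \<eta> / (1 + \<eta>))" by simp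
      show ?thesis using e1 e2 by linarith
    qed
    also have "\<dots> < l1dist x z" using \<delta>0 \<eta>0 by simp
    finally have "l1dist x z' < l1dist x z" .
    thus False using zmin[OF z'Z] by simp
  qed
  obtain k where dk: "0 < d$k"
  proof (rule ccontr)
    assume nt: "\<not> thesis"
    have "\<forall>j. d$j \<le> 0" using that nt by (meson not_le)
    hence "\<forall>j. pos j = 0" by (simp add: pos_def max_def)
    hence "s = 0" by (simp add: s_def)
    thus False using spos by simp
  qed
  have Gne: "G \<noteq> {}" using bG by blast
  have GneP: "G \<noteq> P" using pk_notin[OF dk] by (auto simp: P_def intro: hull_inc)
  have aH: "a \<in> convex hull (range p - G)" unfolding a_def
  proof (rule comb_in_hull[OF \<alpha>S convex_convex_hull])
    fix j assume "0 < \<alpha> $ j"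
    hence "0 < pos j" using spos by (simp add: \<alpha>_def zero_less_divide_iff)
    hence "0 < d$j" by (simp add: pos_def max_def split: if_splits)
    hence "p j \<notin> G" by (rule pk_notin)
    thus "p j \<in> convex hull (range p - G)" by (auto intro: hull_inc)
  qed
  have Phile: "Phi v p \<le> dist_v v G (convex hull (range p - G))"
    using Phi_props(2)[OF pij Gface2 Gne] GneP by (simp add: P_def)
  also have "\<dots> \<le> vnorm v (fst (b, a) - snd (b, a))"
    unfolding dist_v_def
  proof (rule cINF_lower)
    show "bdd_below ((\<lambda>pr. vnorm v (fst pr - snd pr)) ` (G \<times> (convex hull (range p - G))))"
      by (rule bdd_belowI[of _ 0]) (auto simp: vnorm_nonneg)
    show "(b, a) \<in> G \<times> (convex hull (range p - G))" using bG aH by simp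
  qed
  also have "\<dots> = vnorm v (b - a)" by simp
  finally have Phib: "Phi v p \<le> vnorm v (b - a)" .
  have Phi0: "0 < Phi v p" using Phi_props(1)[OF pij] .
  have "vnorm v (b - a) = vnorm v (a - b)" using vnorm_uminus[of v "a - b"] by simp
  hence "(Phi v p)\<^sup>2 \<le> (vnorm v (a - b))\<^sup>2" using Phib Phi0 by (simp add: power_mono)
  hence "s\<^sup>2 * (Phi v p)\<^sup>2 \<le> s\<^sup>2 * (vnorm v (a - b))\<^sup>2" by (simp add: mult_left_mono)
  also have "\<dots> = (s * vnorm v (a - b))\<^sup>2" by (simp add: power_mult_distrib)
  also have "\<dots> \<le> (vnorm v (s *\<^sub>R (a - b)))\<^sup>2" using spos s1 by (intro vnorm_scale) auto
  also have "\<dots> = 2 * (F x - F z0)" using hF[OF x] diffxy by (simp add: y_def)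
  finally have num: "s\<^sup>2 * (Phi v p)\<^sup>2 \<le> 2 * (F x - F z0)" .
  have den: "(INF z\<in>{z\<in>std_simplex. F z = F z0}. l1dist x z)\<^sup>2 = 4 * s\<^sup>2"
    using dZ l1 by (simp add: Z_def power_mult_distrib)
  have "(Phi v p)\<^sup>2 / 4 = s\<^sup>2 * (Phi v p)\<^sup>2 / (4 * s\<^sup>2)" using spos by simp
  also have "\<dots> \<le> 2 * (F x - F z0) / (4 * s\<^sup>2)"
  proof (rule divide_right_mono[OF num])
    show "0 \<le> 4 * s\<^sup>2" by simp
  qed
  finally show ?thesis using den by simp
qed

end

lemma lin_arith:
  fixes c K :: real
  assumes "\<And>t. 0 < t \<Longrightarrow> t \<le> 1 \<Longrightarrow> 0 \<le> t * c + t\<^sup>2 * K" and K: "0 \<le> K"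
  shows "0 \<le> c"
proof (rule ccontr)
  assume "\<not> 0 \<le> c"
  hence c: "c < 0" by simp
  define t where "t = min 1 (- c / (K + 1))"
  have "c / (K + 1) < 0" by (rule divide_neg_pos) (use c K in auto)
  hence t0: "0 < t" by (simp add: t_def)
  have t1: "t \<le> 1" by (simp add: t_def)
  have "t \<le> - c / (K + 1)" by (simp add: t_def)
  hence "t * (K + 1) \<le> (- c / (K + 1)) * (K + 1)" using K by (intro mult_right_mono) auto
  hence "t * (K + 1) \<le> - c" using K by simp
  hence "t * K < - c" using t0 by (simp add: algebra_simps)
  hence "c + t * K < 0" by simp
  hence "t * (c + t * K) < 0" using t0 by (simp add: mult_pos_neg)
  moreover have "t * (c + t * K) = t * c + t\<^sup>2 * K" by (simp add: algebra_simps power2_eq_square)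
  ultimately show False using assms(1)[OF t0 t1] by simp
qed

lemma matvec_comb: "(A :: real^'n^'m) *v x = comb (\<lambda>j. column j A) x"
  by (simp add: vec_eq_iff matrix_vector_mult_def comb_def column_def sum_component mult.commute)

lemma comb_pair:
  fixes A :: "real^'n^'m" and S :: "real^'m^'m" and b :: "real^'m"
  shows "comb (\<lambda>j. (S *v column j A, 2 * (b \<bullet> column j A))) x = (S *v (A *v x), 2 * (b \<bullet> (A *v x)))"
proof -
  have "fst (comb (\<lambda>j. (S *v column j A, 2 * (b \<bullet> column j A))) x) = S *v (A *v x)"
  proof -
    have "fst (comb (\<lambda>j. (S *v column j A, 2 * (b \<bullet> column j A))) x) = (\<Sum>j\<in>UNIV. x$j *\<^sub>R (S *v column j A))"
      by (simp add: comb_def fst_sum)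
    also have "\<dots> = S *v (\<Sum>j\<in>UNIV. x$j *\<^sub>R column j A)"
      by (simp add: vec.sum matrix_vector_mult_scaleR)
    also have "\<dots> = S *v (A *v x)" by (simp add: matvec_comb[of A] comb_def)
    finally show ?thesis .
  qed
  moreover have "snd (comb (\<lambda>j. (S *v column j A, 2 * (b \<bullet> column j A))) x) = 2 * (b \<bullet> (A *v x))"
    by (simp add: comb_def snd_sum matvec_comb[of A] inner_sum_right sum_distrib_left algebra_simps)
  ultimately show ?thesis by (metis prod.collapse)
qed

theorem corollary4:
  fixes A :: "real^'n^'m" and b :: "real^'m" and Q :: "real^'m^'m"
    and f :: "real^'m \<Rightarrow> real"
  assumes "sym_psd Q"
    and "\<exists>i j. (psd_sqrt Q *v column i A, b \<bullet> column i A)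
               \<noteq> (psd_sqrt Q *v column j A, b \<bullet> column j A)"
    and "\<And>u. f u = 1/2 * ((Q *v u) \<bullet> u) + b \<bullet> u"
  shows "let Argmin = {u \<in> convA A. \<forall>u' \<in> convA A. f u \<le> f u'};
             Abar = (\<lambda>j. (psd_sqrt Q *v column j A, 2 * (b \<bullet> column j A)))
         in (\<forall>u1\<in>Argmin. \<forall>u2\<in>Argmin. 2 *\<^sub>R (psd_sqrt Q *v u1) = 2 *\<^sub>R (psd_sqrt Q *v u2))
          \<and> (\<forall>u\<in>Argmin. let v = 2 *\<^sub>R (psd_sqrt Q *v u) in
               mu_star f A \<ge> ereal ((Phi v Abar)\<^sup>2 / 4) \<and> Phi v Abar > 0)"
proof -
  define S where "S = psd_sqrt Q"
  have Sp: "sym_psd S" "S ** S = Q" using psd_sqrt_props[OF assms(1)] by (auto simp: S_def)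
  have symS: "transpose S = S" using Sp by (simp add: sym_psd_def)
  have Qu: "(Q *v u) \<bullet> u = (S *v u) \<bullet> (S *v u)" for u
  proof -
    have "(Q *v u) \<bullet> u = (S *v (S *v u)) \<bullet> u" by (simp add: Sp(2)[symmetric] matrix_vector_mul_assoc)
    also have "\<dots> = u \<bullet> (S *v (S *v u))" by (simp add: inner_commute)
    also have "\<dots> = (S *v u) \<bullet> (S *v u)" by (rule sym_inner[OF symS])
    finally show ?thesis .
  qed
  have fS: "f u = 1/2 * ((S *v u) \<bullet> (S *v u)) + b \<bullet> u" for u using assms(3) Qu by simp
  define Argmin where "Argmin = {u \<in> convA A. \<forall>u' \<in> convA A. f u \<le> f u'}"
  define p where "p = (\<lambda>j. (S *v column j A, 2 * (b \<bullet> column j A)))"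
  have fexp: "f (u + t *\<^sub>R D) = f u + t * ((S *v u) \<bullet> (S *v D) + b \<bullet> D) + t\<^sup>2 * (1/2 * ((S *v D) \<bullet> (S *v D)))"
    for u D t
    by (simp add: fS matrix_vector_right_distrib matrix_vector_mult_scaleR inner_add_left inner_add_right
        inner_commute algebra_simps power2_eq_square)
  have conv_mem: "A *v x \<in> convA A" if "x \<in> std_simplex" for x using that by (auto simp: convA_def)
  have part1: "\<forall>u1\<in>Argmin. \<forall>u2\<in>Argmin. 2 *\<^sub>R (S *v u1) = 2 *\<^sub>R (S *v u2)"
  proof (intro ballI)
    fix u1 u2 assume u1: "u1 \<in> Argmin" and u2: "u2 \<in> Argmin"
    obtain x1 where x1: "x1 \<in> std_simplex" "u1 = A *v x1" using u1 by (auto simp: Argmin_def convA_def)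
    obtain x2 where x2: "x2 \<in> std_simplex" "u2 = A *v x2" using u2 by (auto simp: Argmin_def convA_def)
    define m where "m = u1 + (1/2) *\<^sub>R (u2 - u1)"
    have "m = A *v (x1 + (1/2) *\<^sub>R (x2 - x1))"
      by (simp add: m_def x1(2) x2(2) matrix_vector_right_distrib matrix_vector_mult_scaleR
          matrix_vector_mult_diff_distrib)
    moreover have "x1 + (1/2) *\<^sub>R (x2 - x1) \<in> std_simplex" using simplex_seg[OF x2(1) x1(1), of "1/2"] by simp
    ultimately have mC: "m \<in> convA A" using conv_mem by simp
    have c1: "f u1 \<le> f m" using u1 mC by (auto simp: Argmin_def)
    have c2: "f u1 \<le> f u2" "f u2 \<le> f u1" using u1 u2 by (auto simp: Argmin_def)
    have c3: "f m = f u1 + (1/2) * ((S *v u1) \<bullet> (S *v (u2 - u1)) + b \<bullet> (u2 - u1))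
        + (1/4) * (1/2 * ((S *v (u2 - u1)) \<bullet> (S *v (u2 - u1))))"
      using fexp[of u1 "1/2" "u2 - u1"] by (simp add: m_def power2_eq_square)
    have c4: "f u2 = f u1 + ((S *v u1) \<bullet> (S *v (u2 - u1)) + b \<bullet> (u2 - u1))
        + (1/2 * ((S *v (u2 - u1)) \<bullet> (S *v (u2 - u1))))"
      using fexp[of u1 1 "u2 - u1"] by simp
    define K where "K = (S *v (u2 - u1)) \<bullet> (S *v (u2 - u1))"
    define cc where "cc = (S *v u1) \<bullet> (S *v (u2 - u1)) + b \<bullet> (u2 - u1)"
    have "f m = f u1 + (1/2) * cc + (1/8) * K" using c3 by (simp add: K_def cc_def)
    moreover have "f u2 = f u1 + cc + (1/2) * K" using c4 by (simp add: K_def cc_def)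
    ultimately have "K \<le> 0" using c1 c2 by linarith
    hence "(S *v (u2 - u1)) \<bullet> (S *v (u2 - u1)) \<le> 0" by (simp add: K_def)
    hence "S *v (u2 - u1) = 0" using inner_ge_zero[of "S *v (u2 - u1)"] by simp
    thus "2 *\<^sub>R (S *v u1) = 2 *\<^sub>R (S *v u2)" by (simp add: matrix_vector_mult_diff_distrib)
  qed
  have part2: "\<forall>u\<in>Argmin. let v = 2 *\<^sub>R (S *v u) in
               mu_star f A \<ge> ereal ((Phi v p)\<^sup>2 / 4) \<and> Phi v p > 0"
  proof
    fix u assume u: "u \<in> Argmin"
    obtain z0 where z0: "z0 \<in> std_simplex" "u = A *v z0" using u by (auto simp: Argmin_def convA_def)
    define v where "v = 2 *\<^sub>R (S *v u)"
    define F where "F x = f (A *v x)" for x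
    have Fmin: "F z0 \<le> F x" if "x \<in> std_simplex" for x
      using u conv_mem[OF that] z0 by (auto simp: Argmin_def F_def)
    have cp: "comb p x = (S *v (A *v x), 2 * (b \<bullet> (A *v x)))" for x unfolding p_def by (rule comb_pair)
    define c where "c x = (S *v u) \<bullet> (S *v (A *v x - u)) + b \<bullet> (A *v x - u)" for x
    have c0: "0 \<le> c x" if x: "x \<in> std_simplex" for x
    proof (rule lin_arith)
      fix t :: real assume t: "0 < t" "t \<le> 1"
      have "z0 + t *\<^sub>R (x - z0) \<in> std_simplex" using simplex_seg[OF x z0(1)] t by simp
      hence "F z0 \<le> F (z0 + t *\<^sub>R (x - z0))" by (rule Fmin)
      moreover have "F (z0 + t *\<^sub>R (x - z0)) = f (u + t *\<^sub>R (A *v x - u))"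
        by (simp add: F_def z0(2) matrix_vector_right_distrib matrix_vector_mult_scaleR
            matrix_vector_mult_diff_distrib)
      ultimately show "0 \<le> t * c x + t\<^sup>2 * (1/2 * ((S *v (A *v x - u)) \<bullet> (S *v (A *v x - u))))"
        using fexp[of u t "A *v x - u"] by (simp add: F_def z0(2)[symmetric] c_def)
    qed simp
    have hl: "lin v (comb p z0) \<le> lin v (comb p x)" if "x \<in> std_simplex" for x
    proof -
      have "lin v (comb p x) - lin v (comb p z0) = 2 * c x"
        by (simp add: lin_def cp z0(2)[symmetric] v_def c_def matrix_vector_mult_diff_distrib
            inner_diff_right algebra_simps)
      thus ?thesis using c0[OF that] by simp
    qed
    have hF: "2 * (F x - F z0) = (vnorm v (comb p x - comb p z0))\<^sup>2" if x: "x \<in> std_simplex" for x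
    proof -
      define D where "D = A *v x - u"
      have e1: "v \<bullet> fst (comb p x - comb p z0) + snd (comb p x - comb p z0) = 2 * c x"
        by (simp add: cp z0(2)[symmetric] v_def c_def matrix_vector_mult_diff_distrib inner_diff_right
            algebra_simps)
      have e2: "fst (comb p x - comb p z0) = S *v D"
        by (simp add: cp z0(2)[symmetric] D_def matrix_vector_mult_diff_distrib)
      define dd where "dd = comb p x - comb p z0"
      have nn: "0 \<le> (norm (fst dd))\<^sup>2 + \<bar>v \<bullet> fst dd + snd dd\<bar>" by simp
      have "(vnorm v dd)\<^sup>2 = (norm (fst dd))\<^sup>2 + \<bar>v \<bullet> fst dd + snd dd\<bar>"
        unfolding vnorm_def using nn by (rule real_sqrt_pow2)
      also have "\<dots> = (norm (S *v D))\<^sup>2 + \<bar>2 * c x\<bar>" unfolding dd_def e1 by (simp only: e2)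
      also have "\<dots> = (norm (S *v D))\<^sup>2 + 2 * c x" using c0[OF x] by simp
      finally have "(vnorm v (comb p x - comb p z0))\<^sup>2 = (norm (S *v D))\<^sup>2 + 2 * c x"
        by (simp add: dd_def)
      also have "\<dots> = 2 * (F x - F z0)"
        using fexp[of u 1 D] by (simp add: F_def z0(2)[symmetric] D_def c_def power2_norm_eq_inner)
      finally show ?thesis by simp
    qed
    obtain i j where "(S *v column i A, b \<bullet> column i A) \<noteq> (S *v column j A, b \<bullet> column j A)"
      using assms(2) S_def by auto
    hence pij: "p i \<noteq> p j" by (auto simp: p_def)
    have Phipos: "0 < Phi v p" by (rule Phi_props(1)[OF z0(1) hF hl pij])
    have fst_eq: "fstar f A = F z0"
    proof (rule antisym)
      show "fstar f A \<le> F z0" unfolding fstar_def F_def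
        by (rule cINF_lower[OF _ z0(1)]) (rule bdd_belowI[of _ "F z0"], use Fmin in \<open>auto simp: F_def\<close>)
      show "F z0 \<le> fstar f A" unfolding fstar_def
        by (rule cINF_greatest) (use z0 Fmin in \<open>auto simp: F_def\<close>)
    qed
    have Zeq: "Zstar f A = {z\<in>std_simplex. F z = F z0}" by (simp add: Zstar_def fst_eq F_def)
    have "ereal ((Phi v p)\<^sup>2 / 4) \<le> mu_star f A"
      unfolding mu_star_def
    proof (rule INF_greatest)
      fix x assume x: "x \<in> std_simplex - Zstar f A"
      hence xs: "x \<in> std_simplex" and xn: "F x \<noteq> F z0" using Zeq by auto
      have "(Phi v p)\<^sup>2 / 4 \<le> 2 * (F x - F z0) / (INF z\<in>{z\<in>std_simplex. F z = F z0}. l1dist x z)\<^sup>2"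
        by (rule main_ineq[OF z0(1) hF hl pij xs xn])
      thus "ereal ((Phi v p)\<^sup>2 / 4) \<le> ereal (2 * (f (A *v x) - fstar f A) / (dist_Z f A x)\<^sup>2)"
        by (simp add: dist_Z_def Zeq fst_eq F_def)
    qed
    thus "let v = 2 *\<^sub>R (S *v u) in mu_star f A \<ge> ereal ((Phi v p)\<^sup>2 / 4) \<and> Phi v p > 0"
      using Phipos by (simp add: v_def Let_def)
  qed
  show ?thesis unfolding Let_def S_def[symmetric] Argmin_def[symmetric] p_def[symmetric]
    using part1 part2 unfolding Let_def by (rule conjI)
qed

end
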